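(* Let $e\geqslant 1$ be an integer, $b\geqslant 2$ an even integer, and $a$ a positive integer. Assume there exist an $(e,b)$-happy number $l$ and a positive integer $h'$ with $h'\equiv a\pmod{b-1}$ such that $l\equiv T_{e,b}(h')\pmod{b-1}$. Then there exists an $(e,b)$-happy number $h$ with $h\equiv a\pmod{b-1}$.
   Context: For a positive integer $n=\sum_{j=0}^k a_j b^j$ with $0\leqslant a_j<b$, $T_{e,b}(n)=\sum_{j=0}^k a_j^e$; $T_{e,b}^r$ is the $r$-th iterate, $T_{e,b}^0(n)=n$. A positive integer $n$ is $(e,b)$-happy if $T_{e,b}^r(n)=1$ for some $r\geqslant 0$. *)

theory Defs
  imports Main "HOL-Number_Theory.Cong"
begin

fun T :: "nat \<Rightarrow> nat \<Rightarrow> nat \<Rightarrow> nat" where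
  "T e b n = (if n = 0 \<or> b < 2 then 0 else (n mod b) ^ e + T e b (n div b))"

declare T.simps [simp del]

definition happy :: "nat \<Rightarrow> nat \<Rightarrow> nat \<Rightarrow> bool" where
  "happy e b n \<longleftrightarrow> 0 < n \<and> (\<exists>r. (T e b ^^ r) n = 1)"

end

theory Submission
  imports Defs
begin

lemma T0[simp]: "T e b 0 = 0" by (simp add: T.simps)

lemma b1_cong: "(b::nat) \<ge> 2 \<Longrightarrow> [b = 1] (mod (b - 1))"
proof -
  assume "(b::nat) \<ge> 2"
  then show "[b = 1] (mod (b - 1))" by (subst cong_altdef_nat) auto
qed

lemma T_step:
  assumes "b \<ge> 2" "d < b" "x * b + d > 0"
  shows "T e b (x * b + d) = d ^ e + T e b x"
proof -
  have "(x * b + d) mod b = d" using assms by simp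
  moreover have "(x * b + d) div b = x" using assms by simp
  ultimately show ?thesis using assms by (subst T.simps) auto
qed

fun ext :: "nat \<Rightarrow> nat \<Rightarrow> nat \<Rightarrow> nat" where
  "ext x b 0 = x"
| "ext x b (Suc k) = ext x b k * b + 1"

lemma ext_T:
  assumes "b \<ge> 2"
  shows "T e b (ext x b k) = T e b x + k"
proof (induction k)
  case 0 then show ?case by simp
next
  case (Suc k)
  have "T e b (ext x b (Suc k)) = T e b (ext x b k * b + 1)" by simp
  also have "\<dots> = 1 ^ e + T e b (ext x b k)" using assms by (intro T_step) auto
  finally show ?case using Suc by simp
qed

lemma ext_pos: "x > 0 \<Longrightarrow> ext x b k > 0"
  by (induction k) auto

lemma ext_cong:
  assumes "b \<ge> 2"
  shows "[ext x b k = x + k] (mod (b - 1))"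
proof (induction k)
  case 0 then show ?case by simp
next
  case (Suc k)
  have b1: "[b = 1] (mod (b - 1))" using assms
    by (rule b1_cong)
  have "[ext x b k * b + 1 = ext x b k * 1 + 1] (mod (b - 1))"
    by (intro cong_add cong_mult b1 cong_refl)
  also have "[ext x b k * 1 + 1 = x + k + 1] (mod (b - 1))"
    using Suc by (metis cong_add cong_refl mult_1_right)
  finally show ?case by simp
qed

lemma Tpow:
  assumes "b \<ge> 2" "e \<ge> 1" "l > 0"
  shows "T e b (l * b ^ j) = T e b l"
proof (induction j)
  case 0 then show ?case by simp
next
  case (Suc j)
  have "l * b ^ Suc j = (l * b ^ j) * b + 0" by simp
  also have "T e b \<dots> = 0 ^ e + T e b (l * b ^ j)"
    using assms by (intro T_step) auto
  finally show ?case using Suc assms by simp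
qed

lemma pow_cong:
  fixes b l j :: nat
  assumes "b \<ge> 2"
  shows "[l * b ^ j = l] (mod (b - 1))"
proof -
  have b1: "[b = 1] (mod (b - 1))" using assms
    by (rule b1_cong)
  have "[l * b ^ j = l * 1 ^ j] (mod (b - 1))"
    by (intro cong_mult cong_pow b1 cong_refl)
  then show ?thesis by simp
qed

lemma happy_T:
  assumes "happy e b m" "T e b n = m" "n > 0"
  shows "happy e b n"
proof -
  obtain r where r: "(T e b ^^ r) m = 1" using assms unfolding happy_def by auto
  have "(T e b ^^ Suc r) n = 1" using r assms(2) by (simp add: funpow_Suc_right del: funpow.simps)
  then show ?thesis using assms unfolding happy_def by blast
qed

theorem lemma2p5:
  fixes e b a :: nat
  assumes "e \<ge> 1" and "b \<ge> 2" and "even b" and "a > 0"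
    and "\<exists>l h'. happy e b l \<and> h' > 0 \<and> [h' = a] (mod (b - 1))
               \<and> [l = T e b h'] (mod (b - 1))"
  shows "\<exists>h. happy e b h \<and> [h = a] (mod (b - 1))"
proof -
  obtain l h' where hl: "happy e b l" and hp: "h' > 0" and ha: "[h' = a] (mod (b - 1))"
    and lT: "[l = T e b h'] (mod (b - 1))" using assms(5) by blast
  have l0: "l > 0" using hl unfolding happy_def by auto
  define j where "j = T e b h'"
  define L where "L = l * b ^ j"
  have "j < 2 ^ j" by (rule less_exp)
  also have "\<dots> \<le> b ^ j" using assms(2) by (simp add: power_mono)
  also have "\<dots> \<le> L" using l0 unfolding L_def by simp
  finally have LT: "T e b h' \<le> L" unfolding j_def by simp
  have Lhappy: "happy e b L"
  proof (cases "l = 1")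
    case True
    have "T e b L = T e b 1" using Tpow[OF assms(2,1), of 1 j] True L_def by simp
    also have "\<dots> = 1"
    proof -
      have "T e b (0 * b + 1) = 1 ^ e + T e b 0" using assms(2) by (intro T_step) auto
      then show ?thesis by simp
    qed
    finally have "(T e b ^^ 1) L = 1" by simp
    moreover have "L > 0" using l0 assms(2) unfolding L_def by simp
    ultimately show ?thesis unfolding happy_def by blast
  next
    case False
    obtain r where r: "(T e b ^^ r) l = 1" using hl unfolding happy_def by auto
    with False obtain r' where "r = Suc r'" by (cases r) auto
    then have "(T e b ^^ r') (T e b l) = 1" using r by (simp add: funpow_Suc_right del: funpow.simps)
    then have "(T e b ^^ Suc r') L = 1"
      using Tpow[OF assms(2,1) l0, of j] L_def by (simp add: funpow_Suc_right del: funpow.simps)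
    moreover have "L > 0" using l0 assms(2) unfolding L_def by simp
    ultimately show ?thesis unfolding happy_def by blast
  qed
  define k where "k = L - T e b h'"
  have "[L = T e b h'] (mod (b - 1))"
    using pow_cong[OF assms(2), of l j] lT unfolding L_def by (meson cong_trans)
  then have "(b - 1) dvd k" unfolding k_def using LT
    by (simp add: cong_altdef_nat)
  then have k0: "[k = 0] (mod (b - 1))" by (simp add: cong_0_iff)
  define h where "h = ext h' b k"
  have "T e b h = L" unfolding h_def using ext_T[OF assms(2)] LT k_def by simp
  then have "happy e b h" using happy_T[OF Lhappy] ext_pos[OF hp] h_def by blast
  moreover have "[h = a] (mod (b - 1))"
  proof -
    have "[h = h' + k] (mod (b - 1))" unfolding h_def by (rule ext_cong[OF assms(2)])
    also have "[h' + k = a + 0] (mod (b - 1))" by (intro cong_add ha k0)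
    finally show ?thesis by simp
  qed
  ultimately show ?thesis by blast
qed

end
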